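(* Let $E$ be an Archimedean vector lattice equipped with a completely metrizable locally solid (linear) topology. Then every disjoint system of positive vectors of $E$ is countable if and only if $E$ has a weak unit and the countable sup property.
   Context: A locally solid vector lattice is a vector lattice with a linear topology having a base of zero neighborhoods consisting of solid sets. A disjoint system of positive vectors is a set of vectors $x\ge 0$ that are pairwise disjoint. A vector $e\ge 0$ is a weak unit if $|x|\wedge e=0$ implies $x=0$. A vector lattice has the countable sup property if every nonempty subset possessing a supremum contains a countable subset with the same supremum. *)

theory Defs
  imports "HOL-Analysis.Analysis"
begin

text \<open>Vector lattices (Riesz spaces) are modelled as types of sort
  {ordered_real_vector, lattice}: a real ordered vector space whose order is a lattice.\<close>

definition vabs :: "'a::{ordered_real_vector, lattice} \<Rightarrow> 'a" where
  "vabs x = sup x (- x)"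

definition archimedean_vl :: "'a::{ordered_real_vector, lattice} itself \<Rightarrow> bool" where
  "archimedean_vl _ \<longleftrightarrow>
     (\<forall>x y::'a. 0 \<le> x \<and> 0 \<le> y \<and> (\<forall>n::nat. of_nat n *\<^sub>R x \<le> y) \<longrightarrow> x = 0)"

definition solid :: "'a::{ordered_real_vector, lattice} set \<Rightarrow> bool" where
  "solid S \<longleftrightarrow> (\<forall>x y. x \<in> S \<and> vabs y \<le> vabs x \<longrightarrow> y \<in> S)"

definition linear_topology :: "'a::real_vector topology \<Rightarrow> bool" where
  "linear_topology T \<longleftrightarrow> topspace T = UNIV \<and>
     continuous_map (prod_topology T T) T (\<lambda>(x, y). x + y) \<and>
     continuous_map (prod_topology euclideanreal T) T (\<lambda>(c, x). c *\<^sub>R x)"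

definition locally_solid :: "'a::{ordered_real_vector, lattice} topology \<Rightarrow> bool" where
  "locally_solid T \<longleftrightarrow> linear_topology T \<and>
     (\<forall>U. openin T U \<and> 0 \<in> U \<longrightarrow>
        (\<exists>V. solid V \<and> V \<subseteq> U \<and> (\<exists>W. openin T W \<and> 0 \<in> W \<and> W \<subseteq> V)))"

definition disjoint_system :: "'a::{ordered_real_vector, lattice} set \<Rightarrow> bool" where
  "disjoint_system D \<longleftrightarrow> (\<forall>x\<in>D. 0 \<le> x) \<and> (\<forall>x\<in>D. \<forall>y\<in>D. x \<noteq> y \<longrightarrow> inf x y = 0)"

definition weak_unit :: "'a::{ordered_real_vector, lattice} \<Rightarrow> bool" where
  "weak_unit e \<longleftrightarrow> 0 \<le> e \<and> (\<forall>x. inf (vabs x) e = 0 \<longrightarrow> x = 0)"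

definition is_sup_of :: "'a::order set \<Rightarrow> 'a \<Rightarrow> bool" where
  "is_sup_of A s \<longleftrightarrow> (\<forall>a\<in>A. a \<le> s) \<and> (\<forall>u. (\<forall>a\<in>A. a \<le> u) \<longrightarrow> s \<le> u)"

definition countable_sup_property :: "'a::{ordered_real_vector, lattice} itself \<Rightarrow> bool" where
  "countable_sup_property _ \<longleftrightarrow>
     (\<forall>(A::'a set) s. A \<noteq> {} \<and> is_sup_of A s \<longrightarrow>
        (\<exists>B. B \<subseteq> A \<and> countable B \<and> is_sup_of B s))"

end

theory Submission
  imports Defs
begin

lemma le0_ge0_eq: "(a::'a::{order,zero}) \<le> 0 \<Longrightarrow> 0 \<le> a \<Longrightarrow> a = 0"
  by (rule order.antisym)

lemma inf_add_const:
  fixes a b c :: "'a::{ordered_real_vector, lattice}"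
  shows "inf (a + c) (b + c) = inf a b + c"
proof (rule antisym)
  have "inf (a + c) (b + c) - c \<le> a" "inf (a + c) (b + c) - c \<le> b"
    by (simp_all add: diff_le_eq add_right_mono)
  then have "inf (a + c) (b + c) - c \<le> inf a b" by simp
  then show "inf (a + c) (b + c) \<le> inf a b + c" by (metis diff_le_eq)
next
  show "inf a b + c \<le> inf (a + c) (b + c)" by (simp add: add_right_mono)
qed

lemma inf_scale:
  fixes a b :: "'a::{ordered_real_vector, lattice}"
  assumes "t > 0"
  shows "inf (t *\<^sub>R a) (t *\<^sub>R b) = t *\<^sub>R inf a b"
proof (rule antisym)
  have "inverse t *\<^sub>R inf (t *\<^sub>R a) (t *\<^sub>R b) \<le> inverse t *\<^sub>R (t *\<^sub>R a)"
    using assms by (intro scaleR_left_mono) auto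
  moreover have "inverse t *\<^sub>R inf (t *\<^sub>R a) (t *\<^sub>R b) \<le> inverse t *\<^sub>R (t *\<^sub>R b)"
    using assms by (intro scaleR_left_mono) auto
  ultimately have "inverse t *\<^sub>R inf (t *\<^sub>R a) (t *\<^sub>R b) \<le> inf a b"
    using assms by simp
  then have "t *\<^sub>R (inverse t *\<^sub>R inf (t *\<^sub>R a) (t *\<^sub>R b)) \<le> t *\<^sub>R inf a b"
    using assms by (intro scaleR_left_mono) auto
  then show "inf (t *\<^sub>R a) (t *\<^sub>R b) \<le> t *\<^sub>R inf a b" using assms by simp
next
  show "t *\<^sub>R inf a b \<le> inf (t *\<^sub>R a) (t *\<^sub>R b)" using assms by (auto intro: scaleR_left_mono)
qed

lemma add_eq_sup_inf:
  fixes x y :: "'a::{ordered_real_vector, lattice}"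
  shows "x + y = sup x y + inf x y"
proof -
  have "inf x y = x + y - sup x y"
  proof (rule antisym)
    have "inf x y \<le> x" "inf x y \<le> y" by auto
    then have "x \<le> x + y - inf x y" "y \<le> x + y - inf x y"
      by (simp_all add: algebra_simps le_diff_eq)
    then have "sup x y \<le> x + y - inf x y" by simp
    then show "inf x y \<le> x + y - sup x y" by (simp add: algebra_simps le_diff_eq)
  next
    have "x + y - sup x y \<le> x" "x + y - sup x y \<le> y"
      by (simp_all add: algebra_simps diff_le_eq add_left_mono)
    then show "x + y - sup x y \<le> inf x y" by simp
  qed
  then show ?thesis by simp
qed

lemma neg_inf:
  fixes a b :: "'a::{ordered_real_vector, lattice}"
  shows "- inf a b = sup (- a) (- b)"
proof (rule antisym)
  have "- sup (- a) (- b) \<le> a" "- sup (- a) (- b) \<le> b"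
    by (simp_all add: minus_le_iff)
  then have "- sup (- a) (- b) \<le> inf a b" by simp
  then show "- inf a b \<le> sup (- a) (- b)" by (metis minus_le_iff)
next
  show "sup (- a) (- b) \<le> - inf a b" by simp
qed

lemma pos_neg_disj:
  fixes z :: "'a::{ordered_real_vector, lattice}"
  shows "inf (sup z 0) (sup (- z) 0) = 0"
proof -
  define p where "p = sup z 0"
  define q where "q = sup (- z) 0"
  have q: "q = - inf z 0" unfolding q_def by (simp add: neg_inf)
  have pq: "p - q = z" using add_eq_sup_inf[of z 0] unfolding p_def q by (simp add: algebra_simps)
  have "inf p q = inf (p - q) 0 + q" using inf_add_const[of "p - q" q 0] by simp
  also have "\<dots> = 0" using pq q by simp
  finally show ?thesis unfolding p_def q_def .
qed

lemma disj_scale: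
  fixes a b :: "'a::{ordered_real_vector, lattice}"
  assumes "inf a b = 0" "0 \<le> a" "0 \<le> b" "0 \<le> t"
  shows "inf (t *\<^sub>R a) b = 0"
proof -
  define k where "k = max t 1"
  have k: "k > 0" "t \<le> k" "1 \<le> k" unfolding k_def by auto
  have "inf (t *\<^sub>R a) b \<le> inf (k *\<^sub>R a) (k *\<^sub>R b)"
    using k assms by (intro inf_mono scaleR_right_mono) (auto intro: order_trans[OF _ scaleR_right_mono[of 1 k]])
  also have "\<dots> = 0" using inf_scale[OF k(1), of a b] assms(1) by simp
  finally have "inf (t *\<^sub>R a) b \<le> 0" .
  moreover have "0 \<le> inf (t *\<^sub>R a) b" using assms by (simp add: scaleR_nonneg_nonneg)
  ultimately show ?thesis by simp
qed

lemma vabs_pos: fixes x :: "'a::{ordered_real_vector, lattice}" shows "0 \<le> x \<Longrightarrow> vabs x = x"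
  unfolding vabs_def by (simp add: sup_absorb1 order_trans[of "-x" 0 x])

lemma vabs_nonneg: fixes x :: "'a::{ordered_real_vector, lattice}" shows "0 \<le> vabs x"
proof -
  have "x + (- x) \<le> vabs x + vabs x" unfolding vabs_def by (intro add_mono) auto
  then have "0 \<le> (2::real) *\<^sub>R vabs x" by (simp add: scaleR_2)
  then have "(1/2::real) *\<^sub>R 0 \<le> (1/2::real) *\<^sub>R ((2::real) *\<^sub>R vabs x)"
    by (intro scaleR_left_mono) auto
  then show ?thesis by simp
qed

lemma vabs_zero: fixes x :: "'a::{ordered_real_vector, lattice}" shows "vabs x = 0 \<Longrightarrow> x = 0"
proof -
  assume h: "vabs x = 0"
  have s: "sup x (- x) = 0" using h unfolding vabs_def .
  have a: "x \<le> 0" using sup.cobounded1[of x "- x"] unfolding s .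
  have b: "- x \<le> 0" using sup.cobounded2[of "- x" x] unfolding s .
  from b have c: "0 \<le> x" by simp
  from a c show "x = 0" by (rule le0_ge0_eq)
qed

lemma x_le_vabs: fixes x :: "'a::{ordered_real_vector, lattice}" shows "x \<le> vabs x"
  unfolding vabs_def by simp


lemma max_disj:
  fixes S :: "'a::{ordered_real_vector, lattice} set"
  shows "\<exists>D. disjoint_system D \<and> D \<subseteq> S \<and> (\<forall>w\<in>S. 0 \<le> w \<and> (\<forall>x\<in>D. inf w x = 0) \<longrightarrow> w = 0)"
proof -
  define A where "A = {D. disjoint_system D \<and> D \<subseteq> S}"
  have "\<exists>M\<in>A. \<forall>X\<in>A. M \<subseteq> X \<longrightarrow> X = M"
  proof (rule subset_Zorn')
    fix C assume ch: "subset.chain A C"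
    then have CA: "C \<subseteq> A" and lin: "\<forall>x\<in>C. \<forall>y\<in>C. x \<subseteq> y \<or> y \<subseteq> x"
      unfolding subset.chain_def by auto
    show "\<Union>C \<in> A"
      unfolding A_def disjoint_system_def
    proof (intro CollectI conjI ballI impI)
      fix x assume "x \<in> \<Union>C" then show "0 \<le> x" using CA unfolding A_def disjoint_system_def by blast
    next
      fix x y assume x: "x \<in> \<Union>C" and y: "y \<in> \<Union>C" and xy: "x \<noteq> y"
      then obtain X Y where X: "X \<in> C" "x \<in> X" and Y: "Y \<in> C" "y \<in> Y" by blast
      then have "X \<subseteq> Y \<or> Y \<subseteq> X" using lin by blast
      then obtain Z where "Z \<in> C" "x \<in> Z" "y \<in> Z" using X Y by blast
      then show "inf x y = 0" using CA xy unfolding A_def disjoint_system_def by blast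
    next
      show "\<Union>C \<subseteq> S" using CA unfolding A_def by blast
    qed
  qed
  then obtain M where M: "M \<in> A" and max: "\<forall>X\<in>A. M \<subseteq> X \<longrightarrow> X = M" by blast
  have "\<forall>w\<in>S. 0 \<le> w \<and> (\<forall>x\<in>M. inf w x = 0) \<longrightarrow> w = 0"
  proof (intro ballI impI)
    fix w assume wS: "w \<in> S" and h: "0 \<le> w \<and> (\<forall>x\<in>M. inf w x = 0)"
    show "w = 0"
    proof (cases "w \<in> M")
      case True then show ?thesis using h by (metis inf.idem)
    next
      case False
      have "insert w M \<in> A"
        using M wS h unfolding A_def disjoint_system_def by (auto simp: inf_commute)
      then have "insert w M = M" using max by blast
      then show ?thesis using False by blast
    qed
  qed
  then show ?thesis using M unfolding A_def by blast
qed


lemma arch_le: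
  fixes z e :: "'a::{ordered_real_vector, lattice}"
  assumes "archimedean_vl TYPE('a)" "0 \<le> z" "0 \<le> e" "\<And>n::nat. of_nat n *\<^sub>R z \<le> e"
  shows "z = 0"
  using assms unfolding archimedean_vl_def by blast

lemma inf_countable:
  fixes B :: "'a::{ordered_real_vector, lattice} set"
  assumes arch: "archimedean_vl TYPE('a)"
    and ccc: "\<forall>D::'a set. disjoint_system D \<longrightarrow> countable D"
    and b0B: "b0 \<in> B" and Bpos: "\<forall>b\<in>B. 0 \<le> b"
    and infB: "\<forall>v. (\<forall>b\<in>B. v \<le> b) \<longrightarrow> v \<le> 0"
  shows "\<exists>C \<subseteq> B. countable C \<and> (\<forall>v. (\<forall>c\<in>C. v \<le> c) \<longrightarrow> v \<le> 0)"
proof -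
  define cm :: "nat \<Rightarrow> 'a" where "cm m = inverse (real (Suc m)) *\<^sub>R b0" for m
  have b0pos: "0 \<le> b0" using b0B Bpos by blast
  have cmpos: "0 \<le> cm m" for m unfolding cm_def using b0pos by (simp add: scaleR_nonneg_nonneg)
  have cmb0: "real (Suc m) *\<^sub>R cm m = b0" for m unfolding cm_def by simp
  define P where "P m w \<longleftrightarrow> (\<exists>b\<in>B. inf w (sup (b - cm m) 0) = 0)" for m w
  have "\<forall>m. \<exists>D. disjoint_system D \<and> D \<subseteq> {w. P m w} \<and>
      (\<forall>w\<in>{w. P m w}. 0 \<le> w \<and> (\<forall>x\<in>D. inf w x = 0) \<longrightarrow> w = 0)"
    using max_disj by blast
  then obtain F where F0: "\<forall>m. disjoint_system (F m) \<and> F m \<subseteq> {w. P m w} \<and>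
      (\<forall>w\<in>{w. P m w}. 0 \<le> w \<and> (\<forall>x\<in>F m. inf w x = 0) \<longrightarrow> w = 0)"
    by (rule choice[THEN exE])
  have F: "\<And>m. disjoint_system (F m)" "\<And>m. F m \<subseteq> {w. P m w}"
    "\<And>m w. P m w \<Longrightarrow> 0 \<le> w \<Longrightarrow> (\<forall>x\<in>F m. inf w x = 0) \<Longrightarrow> w = 0"
    using F0 by blast+
  define bw where "bw m w = (SOME b. b \<in> B \<and> inf w (sup (b - cm m) 0) = 0)" for m w
  have bw: "bw m w \<in> B" "inf w (sup (bw m w - cm m) 0) = 0" if "w \<in> F m" for m w
  proof -
    have "P m w" using F(2) that by blast
    then have "\<exists>b. b \<in> B \<and> inf w (sup (b - cm m) 0) = 0" unfolding P_def by blast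
    then have "bw m w \<in> B \<and> inf w (sup (bw m w - cm m) 0) = 0"
      unfolding bw_def by (rule someI_ex)
    then show "bw m w \<in> B" "inf w (sup (bw m w - cm m) 0) = 0" by blast+
  qed
  define C where "C = insert b0 (\<Union>m. bw m ` F m)"
  have CB: "C \<subseteq> B" unfolding C_def using b0B bw by blast
  have cC: "countable C" unfolding C_def using ccc F(1) by auto
  have "v \<le> 0" if v: "\<forall>c\<in>C. v \<le> c" for v
  proof -
    have vb0: "v \<le> b0" using v unfolding C_def by blast
    have vcm: "v \<le> cm m" for m
    proof -
      define p where "p = sup (v - cm m) 0"
      have p0: "0 \<le> p" unfolding p_def by simp
      have pF: "inf p x = 0" if "x \<in> F m" for x
      proof -
        have "v \<le> bw m x" using v that unfolding C_def by blast
        then have "p \<le> sup (bw m x - cm m) 0" unfolding p_def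
          by (intro sup_mono) (auto simp: diff_right_mono)
        then have "inf p x \<le> inf (sup (bw m x - cm m) 0) x" by (rule inf_mono) simp
        also have "\<dots> = 0" using bw(2)[OF that] by (simp add: inf_commute)
        finally have "inf p x \<le> 0" .
        moreover have "0 \<le> x" using F(1) that unfolding disjoint_system_def by blast
        ultimately show ?thesis using p0 by (intro le0_ge0_eq) auto
      qed
      have wb: "inf p (sup (cm m - b) 0) = 0" if bB: "b \<in> B" for b
      proof (rule F(3)[of m])
        show "P m (inf p (sup (cm m - b) 0))" unfolding P_def
        proof (rule bexI[OF _ bB])
          have "inf (inf p (sup (cm m - b) 0)) (sup (b - cm m) 0) \<le> inf (sup (cm m - b) 0) (sup (b - cm m) 0)"
            by (intro inf_mono) auto
          also have "\<dots> = 0" using pos_neg_disj[of "cm m - b"] by simp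
          finally show "inf (inf p (sup (cm m - b) 0)) (sup (b - cm m) 0) = 0"
            using p0 by (intro le0_ge0_eq) auto
        qed
        show "0 \<le> inf p (sup (cm m - b) 0)" using p0 by simp
        show "\<forall>x\<in>F m. inf (inf p (sup (cm m - b) 0)) x = 0"
        proof
          fix x assume x: "x \<in> F m"
          have "inf (inf p (sup (cm m - b) 0)) x \<le> inf p x" by (intro inf_mono) auto
          then have "inf (inf p (sup (cm m - b) 0)) x \<le> 0" using pF[OF x] by simp
          moreover have "0 \<le> x" using F(1) x unfolding disjoint_system_def by blast
          ultimately show "inf (inf p (sup (cm m - b) 0)) x = 0" using p0 by (intro le0_ge0_eq) auto
        qed
      qed
      have "inf p (cm m) \<le> b" if bB: "b \<in> B" for b
      proof -
        have b0': "0 \<le> b" using Bpos bB by blast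
        have "inf p (cm m) - b \<le> p" using b0' by (simp add: diff_le_eq le_add_same_cancel1 le_infI1 add_increasing2)
        moreover have "inf p (cm m) - b \<le> sup (cm m - b) 0"
          by (meson diff_right_mono inf.cobounded2 order_trans sup.cobounded1)
        ultimately have "inf p (cm m) - b \<le> inf p (sup (cm m - b) 0)" by simp
        then show ?thesis using wb[OF bB] by simp
      qed
      then have ipc: "inf p (cm m) \<le> 0" using infB by blast
      have pb0: "p \<le> b0" unfolding p_def using vb0 cmpos[of m] b0pos
        by (simp add: diff_le_eq add_increasing2)
      have "p = inf p b0" using pb0 by (simp add: inf_absorb1)
      also have "\<dots> \<le> inf (real (Suc m) *\<^sub>R p) (real (Suc m) *\<^sub>R cm m)"
        unfolding cmb0 using p0 by (intro inf_mono order_refl) (rule order_trans[OF _ scaleR_right_mono[of 1]], auto)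
      also have "\<dots> = real (Suc m) *\<^sub>R inf p (cm m)" by (rule inf_scale) simp
      also have "\<dots> \<le> real (Suc m) *\<^sub>R 0" using ipc by (intro scaleR_left_mono) auto
      also have "\<dots> = 0" by simp
      finally have "p = 0" using p0 by (intro le0_ge0_eq) auto
      then have "v - cm m \<le> 0" using sup.cobounded1[of "v - cm m" 0] unfolding p_def by simp
      then show ?thesis by simp
    qed
    define v' where "v' = sup v 0"
    have "of_nat n *\<^sub>R v' \<le> b0" for n
    proof (cases n)
      case 0 then show ?thesis using b0pos by simp
    next
      case (Suc m)
      have "v' \<le> cm m" unfolding v'_def using vcm[of m] cmpos[of m] by simp
      then have "real (Suc m) *\<^sub>R v' \<le> real (Suc m) *\<^sub>R cm m" by (rule scaleR_left_mono) simp
      then show ?thesis using Suc cmb0[of m] by simp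
    qed
    then have "v' = 0" using arch_le[OF arch _ b0pos] unfolding v'_def by simp
    then show "v \<le> 0" unfolding v'_def by (metis sup.cobounded1)
  qed
  then show ?thesis using CB cC by blast
qed


lemma csp_from_ccc:
  assumes arch: "archimedean_vl TYPE('a::{ordered_real_vector, lattice})"
    and ccc: "\<forall>D::'a set. disjoint_system D \<longrightarrow> countable D"
  shows "countable_sup_property TYPE('a)"
  unfolding countable_sup_property_def
proof (intro allI impI)
  fix A :: "'a set" and s assume h: "A \<noteq> {} \<and> is_sup_of A s"
  then obtain a0 where a0: "a0 \<in> A" by blast
  have ub: "\<forall>a\<in>A. a \<le> s" and least: "\<forall>u. (\<forall>a\<in>A. a \<le> u) \<longrightarrow> s \<le> u"
    using h unfolding is_sup_of_def by auto
  define B where "B = (\<lambda>a. s - a) ` A"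
  have "s - a0 \<in> B" using a0 unfolding B_def by blast
  moreover have "\<forall>b\<in>B. 0 \<le> b" using ub unfolding B_def by auto
  moreover have "\<forall>v. (\<forall>b\<in>B. v \<le> b) \<longrightarrow> v \<le> 0"
  proof (intro allI impI)
    fix v assume "\<forall>b\<in>B. v \<le> b"
    then have "\<forall>a\<in>A. a \<le> s - v" unfolding B_def by (auto simp: le_diff_eq algebra_simps)
    then have "s \<le> s - v" using least by blast
    then show "v \<le> 0" by (simp add: le_diff_eq)
  qed
  ultimately obtain C where C: "C \<subseteq> B" "countable C" "\<forall>v. (\<forall>c\<in>C. v \<le> c) \<longrightarrow> v \<le> 0"
    using inf_countable[OF arch ccc] by metis
  define A' where "A' = {a\<in>A. s - a \<in> C}"
  have "A' \<subseteq> (\<lambda>c. s - c) ` C" unfolding A'_def by force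
  then have cA': "countable A'" using C(2) countable_subset by blast
  have "is_sup_of A' s" unfolding is_sup_of_def
  proof (intro conjI allI impI ballI)
    fix a assume "a \<in> A'" then show "a \<le> s" using ub unfolding A'_def by blast
  next
    fix u assume u: "\<forall>a\<in>A'. a \<le> u"
    have "\<forall>c\<in>C. s - u \<le> c"
    proof
      fix c assume c: "c \<in> C"
      then obtain a where a: "a \<in> A" "c = s - a" using C(1) unfolding B_def by blast
      then have "a \<in> A'" using c unfolding A'_def by blast
      then have "a \<le> u" using u by blast
      then show "s - u \<le> c" unfolding a(2) by (rule diff_left_mono)
    qed
    then have "s - u \<le> 0" using C(3) by blast
    then show "s \<le> u" by (simp only: diff_le_0_iff_le)
  qed
  moreover have "A' \<subseteq> A" unfolding A'_def by blast
  ultimately show "\<exists>B\<subseteq>A. countable B \<and> is_sup_of B s" using cA' by blast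
qed


lemma key_zero:
  fixes z e :: "'a::{ordered_real_vector, lattice}"
  assumes arch: "archimedean_vl TYPE('a)" and z0: "0 \<le> z" and e0: "0 \<le> e"
    and h: "\<And>k::nat. z + inf e (of_nat k *\<^sub>R z) \<le> e"
  shows "z = 0"
proof -
  have "of_nat k *\<^sub>R z \<le> e" for k
  proof (induction k)
    case 0 then show ?case using e0 by simp
  next
    case (Suc k)
    have "inf e (of_nat k *\<^sub>R z) = of_nat k *\<^sub>R z" using Suc by (simp add: inf_absorb2)
    then have "z + of_nat k *\<^sub>R z \<le> e" using h[of k] by simp
    then show ?case by (simp add: scaleR_left_distrib add.commute)
  qed
  then show ?thesis using arch_le[OF arch z0 e0] by blast
qed

lemma ccc_from_wu_csp:
  fixes e :: "'a::{ordered_real_vector, lattice}" and D :: "'a set"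
  assumes arch: "archimedean_vl TYPE('a)" and wu: "weak_unit e"
    and csp: "countable_sup_property TYPE('a)"
    and D: "disjoint_system D"
  shows "countable D"
proof (rule ccontr)
  assume unc: "\<not> countable D"
  have e0: "0 \<le> e" using wu unfolding weak_unit_def by blast
  have Dpos: "\<forall>d\<in>D. 0 \<le> d" and Ddisj: "\<forall>x\<in>D. \<forall>y\<in>D. x \<noteq> y \<longrightarrow> inf x y = 0"
    using D unfolding disjoint_system_def by auto
  define X where "X = (\<lambda>d. inf d e) ` (D - {0})"
  have nz: "inf d e \<noteq> 0" if "d \<in> D - {0}" for d
  proof
    assume "inf d e = 0"
    moreover have "vabs d = d" using Dpos that vabs_pos by blast
    ultimately have "inf (vabs d) e = 0" by simp
    then have "d = 0" using wu unfolding weak_unit_def by blast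
    then show False using that by blast
  qed
  have inj: "inj_on (\<lambda>d. inf d e) (D - {0})"
  proof (rule inj_onI)
    fix d d' assume d: "d \<in> D - {0}" and d': "d' \<in> D - {0}" and eq: "inf d e = inf d' e"
    show "d = d'"
    proof (rule ccontr)
      assume "d \<noteq> d'"
      then have "inf d d' = 0" using Ddisj d d' by blast
      then have "inf (inf d e) (inf d' e) \<le> 0" by (metis inf.cobounded1 inf_mono)
      moreover have "0 \<le> inf (inf d e) (inf d' e)" using Dpos d d' e0 by simp
      ultimately have "inf (inf d e) (inf d' e) = 0" by simp
      then show False using eq nz[OF d] by simp
    qed
  qed
  have uncX: "\<not> countable X"
  proof
    assume "countable X"
    then have "countable (D - {0})" using inj unfolding X_def by (rule countable_image_inj_on)
    then have "countable D" by (metis countable_insert insert_Diff_single countable_subset subset_insertI)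
    then show False using unc by blast
  qed
  have Xpos: "\<forall>x\<in>X. 0 \<le> x \<and> x \<le> e \<and> x \<noteq> 0" unfolding X_def using Dpos e0 nz by auto
  have Xdisj: "\<forall>x\<in>X. \<forall>y\<in>X. x \<noteq> y \<longrightarrow> inf x y = 0"
  proof (intro ballI impI)
    fix x y assume x: "x \<in> X" and y: "y \<in> X" and xy: "x \<noteq> y"
    then obtain d d' where d: "d \<in> D - {0}" "x = inf d e" and d': "d' \<in> D - {0}" "y = inf d' e"
      unfolding X_def by blast
    then have "d \<noteq> d'" using xy by blast
    then have "inf d d' = 0" using Ddisj d d' by blast
    then have "inf x y \<le> 0" using d d' by (metis inf.cobounded1 inf_mono)
    moreover have "0 \<le> inf x y" using Xpos x y by simp
    ultimately show "inf x y = 0" by simp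
  qed
  obtain i0 where i0: "i0 \<in> X" using uncX by (metis countable_empty ex_in_conv)
  define A where "A = {y. 0 \<le> y \<and> y \<le> e \<and> (\<exists>i\<in>X. \<forall>j\<in>X. j \<noteq> i \<longrightarrow> inf y j = 0)}"
  have inA: "y \<in> A" if "0 \<le> y" "y \<le> e" "\<forall>j\<in>X. j \<noteq> i \<longrightarrow> inf y j = 0" "i \<in> X" for y i
    using that unfolding A_def by blast
  have A0: "0 \<in> A" using inA[of 0 i0] i0 e0 Xpos by (simp add: inf_absorb1)
  have supA: "is_sup_of A e" unfolding is_sup_of_def
  proof (intro conjI ballI allI impI)
    fix y assume "y \<in> A" then show "y \<le> e" unfolding A_def by blast
  next
    fix u assume u: "\<forall>y\<in>A. y \<le> u"
    have u0: "0 \<le> u" using u A0 by blast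
    have scale_in: "inf e (of_nat k *\<^sub>R z) \<in> A"
      if z0: "0 \<le> z" and zi: "\<forall>j\<in>X. j \<noteq> i \<longrightarrow> inf z j = 0" and iX: "i \<in> X" for z i k
    proof (rule inA[OF _ _ _ iX])
      show "0 \<le> inf e (of_nat k *\<^sub>R z)" using e0 z0 by (simp add: scaleR_nonneg_nonneg)
      show "inf e (of_nat k *\<^sub>R z) \<le> e" by simp
      show "\<forall>j\<in>X. j \<noteq> i \<longrightarrow> inf (inf e (of_nat k *\<^sub>R z)) j = 0"
      proof (intro ballI impI)
        fix j assume j: "j \<in> X" "j \<noteq> i"
        have "inf (of_nat k *\<^sub>R z) j = 0" using disj_scale[of z j "of_nat k"] zi j z0 Xpos by simp
        then have "inf (inf e (of_nat k *\<^sub>R z)) j \<le> 0" by (metis inf.cobounded2 inf_mono order_refl)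
        moreover have "0 \<le> inf (inf e (of_nat k *\<^sub>R z)) j"
          using e0 z0 Xpos j by (simp add: scaleR_nonneg_nonneg)
        ultimately show "inf (inf e (of_nat k *\<^sub>R z)) j = 0" by simp
      qed
    qed
    define w where "w = sup (e - u) 0"
    have w0: "0 \<le> w" unfolding w_def by simp
    have G: "z + inf e (of_nat k *\<^sub>R z) \<le> e" if "z \<le> w" "inf e (of_nat k *\<^sub>R z) \<le> u" for z k
    proof -
      have "w \<le> e - inf e (of_nat k *\<^sub>R z)" unfolding w_def
        using that(2) by (simp add: diff_left_mono)
      then have "w + inf e (of_nat k *\<^sub>R z) \<le> e" by (simp add: le_diff_eq)
    then show ?thesis using that(1) by (meson add_right_mono order_trans)
    qed
    have wX: "inf w i = 0" if iX: "i \<in> X" for i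
    proof (rule key_zero[OF arch _ e0])
      have i0': "0 \<le> i" using Xpos iX by blast
      show "0 \<le> inf w i" by (rule le_infI[OF w0 i0'])
      fix k :: nat
      have "inf e (of_nat k *\<^sub>R inf w i) \<le> inf e (of_nat k *\<^sub>R i)"
        by (rule inf_mono[OF order_refl scaleR_left_mono[OF inf.cobounded2]]) simp
      also have "\<dots> \<le> u"
      proof -
        have ij: "\<forall>j\<in>X. j \<noteq> i \<longrightarrow> inf i j = 0"
        proof (intro ballI impI)
          fix j assume j: "j \<in> X" "j \<noteq> i"
          then have ji: "i \<noteq> j" by simp
          show "inf i j = 0" by (rule Xdisj[rule_format, OF iX j(1) ji])
        qed
        have i0': "0 \<le> i" using Xpos iX by blast
        have "inf e (of_nat k *\<^sub>R i) \<in> A" by (rule scale_in[OF i0' ij iX])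
        then show ?thesis by (rule bspec[OF u])
      qed
      finally show "inf w i + inf e (of_nat k *\<^sub>R inf w i) \<le> e" by (rule G[OF inf.cobounded1])
    qed
    have "w = 0"
    proof (rule key_zero[OF arch w0 e0])
      fix k :: nat
      have "\<forall>j\<in>X. j \<noteq> i0 \<longrightarrow> inf w j = 0" using wX by blast
      then have "inf e (of_nat k *\<^sub>R w) \<in> A" by (rule scale_in[OF w0 _ i0])
      then have "inf e (of_nat k *\<^sub>R w) \<le> u" by (rule bspec[OF u])
      then show "w + inf e (of_nat k *\<^sub>R w) \<le> e" by (rule G[OF order_refl])
    qed
    then show "e \<le> u" unfolding w_def by (metis sup.cobounded1 diff_le_0_iff_le)
  qed
  have "A \<noteq> {}" using A0 by blast
  then obtain B where B: "B \<subseteq> A" "countable B" "is_sup_of B e"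
    using csp supA unfolding countable_sup_property_def by blast
  define idx where "idx y = (SOME i. i \<in> X \<and> (\<forall>j\<in>X. j \<noteq> i \<longrightarrow> inf y j = 0))" for y
  have idx: "idx y \<in> X" "\<forall>j\<in>X. j \<noteq> idx y \<longrightarrow> inf y j = 0" if "y \<in> A" for y
  proof -
    have "\<exists>i. i \<in> X \<and> (\<forall>j\<in>X. j \<noteq> i \<longrightarrow> inf y j = 0)" using that unfolding A_def by blast
    then have "idx y \<in> X \<and> (\<forall>j\<in>X. j \<noteq> idx y \<longrightarrow> inf y j = 0)"
      unfolding idx_def by (rule someI_ex)
    then show "idx y \<in> X" "\<forall>j\<in>X. j \<noteq> idx y \<longrightarrow> inf y j = 0" by blast+
  qed
  have "countable (idx ` B)" using B(2) by simp
  then obtain j where j: "j \<in> X" "j \<notin> idx ` B" using uncX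
    by (metis countable_subset subsetI)
  have "y \<le> e - j" if yB: "y \<in> B" for y
  proof -
    have yA: "y \<in> A" using yB B(1) by blast
    have "inf y j = 0" using idx[OF yA] j yB by (metis image_eqI)
    then have "y + j = sup y j" using add_eq_sup_inf[of y j] by simp
    also have "\<dots> \<le> e"
    proof (rule le_supI)
      show "y \<le> e" using yA unfolding A_def by blast
      show "j \<le> e" using Xpos j by blast
    qed
    finally show ?thesis by (simp add: le_diff_eq)
  qed
  then have "e \<le> e - j" using B(3) unfolding is_sup_of_def by blast
  then have "j \<le> 0" by (simp add: le_diff_eq)
  moreover have "0 \<le> j" using Xpos j by blast
  ultimately have "j = 0" by (rule le0_ge0_eq)
  then show False using Xpos j by blast
qed


lemma lin_cont_line:
  fixes T :: "'a::{ordered_real_vector, lattice} topology"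
  assumes "linear_topology T"
  shows "continuous_map euclideanreal T (\<lambda>t. x + t *\<^sub>R v)"
proof -
  have top: "topspace T = UNIV" using assms unfolding linear_topology_def by blast
  have add: "continuous_map (prod_topology T T) T (\<lambda>(x, y). x + y)"
    and sm: "continuous_map (prod_topology euclideanreal T) T (\<lambda>(c, x). c *\<^sub>R x)"
    using assms unfolding linear_topology_def by auto
  have c1: "continuous_map euclideanreal (prod_topology euclideanreal T) (\<lambda>t. (t, v))"
    by (intro continuous_map_pairedI) (auto simp: top)
  have c2: "continuous_map euclideanreal T (\<lambda>t. t *\<^sub>R v)"
    using continuous_map_compose[OF c1 sm] by (simp add: o_def)
  have c3: "continuous_map euclideanreal (prod_topology T T) (\<lambda>t. (x, t *\<^sub>R v))"
    by (intro continuous_map_pairedI c2) (auto simp: top)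
  show ?thesis using continuous_map_compose[OF c3 add] by (simp add: o_def)
qed

lemma lin_cont_trans:
  fixes T :: "'a::{ordered_real_vector, lattice} topology"
  assumes "linear_topology T"
  shows "continuous_map T T (\<lambda>y. y - l)"
proof -
  have top: "topspace T = UNIV" using assms unfolding linear_topology_def by blast
  have add: "continuous_map (prod_topology T T) T (\<lambda>(x, y). x + y)"
    using assms unfolding linear_topology_def by auto
  have c3: "continuous_map T (prod_topology T T) (\<lambda>y. (y, - l))"
    by (intro continuous_map_pairedI) (auto simp: top)
  show ?thesis using continuous_map_compose[OF c3 add] by (simp add: o_def)
qed

lemma wu_from_ccc:
  fixes T :: "'a::{ordered_real_vector, lattice} topology"
  assumes ls: "locally_solid T" and cms: "completely_metrizable_space T"
    and ccc: "\<forall>D::'a set. disjoint_system D \<longrightarrow> countable D"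
  shows "\<exists>e::'a. weak_unit e"
proof -
  have lin: "linear_topology T" using ls unfolding locally_solid_def by blast
  have top: "topspace T = UNIV" using lin unfolding linear_topology_def by blast
  obtain D :: "'a set" where D: "disjoint_system D"
    and maxD: "\<forall>w\<in>UNIV. 0 \<le> w \<and> (\<forall>x\<in>D. inf w x = 0) \<longrightarrow> w = 0"
    using max_disj[of UNIV] by blast
  have cD: "countable (insert 0 D)" using ccc D by simp
  define d where "d = from_nat_into (insert 0 D)"
  have rd: "range d = insert 0 D" unfolding d_def using cD by simp
  have d0: "0 \<le> d n" for n
  proof -
    have "d n \<in> insert 0 D" using rd by blast
    then show ?thesis using D unfolding disjoint_system_def by auto
  qed
  obtain M m where Mm: "Metric_space M m" "Metric_space.mcomplete M m" "T = Metric_space.mtopology M m"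
    using cms unfolding completely_metrizable_space_def by blast
  interpret Metric_space M m by (rule Mm(1))
  have MU: "M = UNIV" using top Mm(3) by simp
  have inM: "z \<in> M" for z using MU by simp
  have ex_c: "\<exists>c>0. m x (x + c *\<^sub>R v) < (1/2)^N" for x v and N :: nat
  proof -
    have cont: "continuous_map euclideanreal T (\<lambda>t. x + t *\<^sub>R v)" by (rule lin_cont_line[OF lin])
    have "openin T (mball x ((1/2)^N))" using Mm(3) by simp
    then have "openin euclideanreal {t \<in> topspace euclideanreal. x + t *\<^sub>R v \<in> mball x ((1/2)^N)}"
      by (rule openin_continuous_map_preimage[OF cont])
    then have op: "open {t. x + t *\<^sub>R v \<in> mball x ((1/2)^N)}" by simp
    have "0 \<in> {t. x + t *\<^sub>R v \<in> mball x ((1/2)^N)}" using inM by simp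
    then obtain \<delta> where \<delta>: "\<delta> > 0" "ball 0 \<delta> \<subseteq> {t. x + t *\<^sub>R v \<in> mball x ((1/2)^N)}"
      by (rule openE[OF op])
    have "\<delta>/2 \<in> ball 0 \<delta>" using \<delta>(1) by simp
    then have "\<delta>/2 \<in> {t. x + t *\<^sub>R v \<in> mball x ((1/2)^N)}" using \<delta>(2) by (rule subsetD[rotated])
    then have "m x (x + (\<delta>/2) *\<^sub>R v) < (1/2)^N" by simp
    then show ?thesis using \<delta>(1) by (intro exI[of _ "\<delta>/2"]) simp
  qed
  define cc where "cc x N = (SOME c. c > 0 \<and> m x (x + c *\<^sub>R d N) < (1/2)^N)" for x N
  have cc: "cc x N > 0" "m x (x + cc x N *\<^sub>R d N) < (1/2)^N" for x N
    using someI_ex[OF ex_c[of x "d N" N]] unfolding cc_def by auto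
  define s where "s = rec_nat 0 (\<lambda>N x. x + cc x N *\<^sub>R d N)"
  have s0: "s 0 = 0" and sS: "s (Suc N) = s N + cc (s N) N *\<^sub>R d N" for N
    unfolding s_def by simp_all
  define c where "c N = cc (s N) N" for N
  have c0: "c N > 0" for N unfolding c_def using cc by blast
  have sS': "s (Suc N) = s N + c N *\<^sub>R d N" for N unfolding c_def by (rule sS)
  have step: "m (s N) (s (Suc N)) < (1/2)^N" for N unfolding sS using cc by blast
  have spos: "0 \<le> s N" for N
    by (induction N) (auto simp: s0 sS' intro!: add_nonneg_nonneg scaleR_nonneg_nonneg less_imp_le[OF c0] d0)
  have smono: "s N \<le> s (N + k)" for N k
  proof (induction k)
    case (Suc k) then show ?case
      using c0 d0 by (simp add: sS' add_increasing2 scaleR_nonneg_nonneg less_imp_le)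
  qed simp
  have dist_bound: "m (s N) (s (N + k)) \<le> 2 * (1/2)^N - 2 * (1/2)^(N+k)" for N k
  proof (induction k)
    case 0 then show ?case using inM by simp
  next
    case (Suc k)
    have "m (s N) (s (N + Suc k)) \<le> m (s N) (s (N + k)) + m (s (N + k)) (s (N + Suc k))"
      using inM by (intro triangle) auto
    also have "\<dots> \<le> 2 * (1/2)^N - 2 * (1/2)^(N+k) + (1/2)^(N+k)"
      using Suc step[of "N+k"] by simp
    also have "\<dots> = 2 * (1/2)^N - 2 * (1/2)^(N + Suc k)" by simp
    finally show ?case .
  qed
  have dist_bound': "m (s N) (s n) \<le> 2 * (1/2)^N" if Nn: "N \<le> n" for N n
  proof -
    obtain k where nk: "n = N + k" using le_Suc_ex[OF Nn] by (elim exE)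
    have "(0::real) \<le> (1/2)^(N+k)" by simp
    then have "m (s N) (s (N + k)) \<le> 2 * (1/2)^N" using dist_bound[of N k] by linarith
    then show ?thesis unfolding nk .
  qed
  have "MCauchy s" unfolding MCauchy_def
  proof (intro conjI allI impI)
    show "range s \<subseteq> M" using inM by auto
    fix \<epsilon> :: real assume \<epsilon>: "\<epsilon> > 0"
    obtain N where N: "(1/2::real)^N < \<epsilon>/4" using real_arch_pow_inv[of "\<epsilon>/4" "1/2"] \<epsilon> by auto
    show "\<exists>N. \<forall>n n'. N \<le> n \<longrightarrow> N \<le> n' \<longrightarrow> m (s n) (s n') < \<epsilon>"
    proof (intro exI allI impI)
      fix n n' assume "N \<le> n" "N \<le> n'"
      then have "m (s n) (s n') \<le> m (s N) (s n) + m (s N) (s n')"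
        using inM triangle'' by simp
      also have "\<dots> \<le> 2 * (1/2)^N + 2 * (1/2)^N"
        using dist_bound' \<open>N \<le> n\<close> \<open>N \<le> n'\<close> by (intro add_mono) auto
      also have "\<dots> < \<epsilon>" using N by simp
      finally show "m (s n) (s n') < \<epsilon>" .
    qed
  qed
  then obtain l where lim: "limitin T s l sequentially" using Mm(2,3) unfolding mcomplete_def by blast
  define e where "e = sup l 0"
  have "weak_unit e" unfolding weak_unit_def
  proof (intro conjI allI impI)
    show "0 \<le> e" unfolding e_def by simp
    fix x assume hx: "inf (vabs x) e = 0"
    define y where "y = vabs x"
    have y0: "0 \<le> y" unfolding y_def by (rule vabs_nonneg)
    have t1: "t1_space T"
      using cms by (intro Hausdorff_imp_t1_space metrizable_imp_Hausdorff_space completely_metrizable_imp_metrizable_space)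
    have dn: "inf y (d n) = 0" for n
    proof -
      define a where "a = inf y (c n *\<^sub>R d n)"
      have a0: "0 \<le> a" unfolding a_def using y0 d0 c0 by (simp add: scaleR_nonneg_nonneg less_imp_le)
      have aM: "a \<le> vabs (s M - l)" if "Suc n \<le> M" for M
      proof -
        have "c n *\<^sub>R d n \<le> s (Suc n)" using spos[of n] by (simp add: sS')
        also have "\<dots> \<le> s M" using smono[of "Suc n" "M - Suc n"] that by simp
        finally have "a \<le> inf y (s M)" unfolding a_def by (intro inf_mono) auto
        also have "\<dots> \<le> inf y (e + vabs (s M - l))"
        proof (rule inf_mono[OF order_refl])
          have "s M - l \<le> vabs (s M - l)" by (rule x_le_vabs)
          then have h1: "s M \<le> vabs (s M - l) + l" by (simp only: diff_le_eq)
          have "l \<le> e" unfolding e_def by simp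
          then have "vabs (s M - l) + l \<le> vabs (s M - l) + e" by (rule add_left_mono)
          with h1 have "s M \<le> vabs (s M - l) + e" by (rule order_trans)
          then show "s M \<le> e + vabs (s M - l)" by (simp only: add.commute)
        qed
        also have "\<dots> \<le> inf (y + vabs (s M - l)) (e + vabs (s M - l))"
          using vabs_nonneg[of "s M - l"] by (intro inf_mono) (auto simp: add_increasing2)
        also have "\<dots> = vabs (s M - l)" using inf_add_const[of y "vabs (s M - l)" e] hx y_def by simp
        finally show ?thesis .
      qed
      have "a = 0"
      proof (rule ccontr)
        assume an: "a \<noteq> 0"
        have "closedin T {a}" using t1 top by (simp add: closedin_t1_singleton)
        then have U: "openin T (UNIV - {a})" using top by (simp add: closedin_def)
        then obtain V where V: "solid V" "V \<subseteq> UNIV - {a}" "\<exists>W. openin T W \<and> 0 \<in> W \<and> W \<subseteq> V"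
          using ls an unfolding locally_solid_def by (metis Diff_iff singletonD UNIV_I)
        then obtain W where W: "openin T W" "0 \<in> W" "W \<subseteq> V" by blast
        have "openin T {z \<in> topspace T. z - l \<in> W}"
          using openin_continuous_map_preimage[OF lin_cont_trans[OF lin] W(1)] by simp
        moreover have "l \<in> {z \<in> topspace T. z - l \<in> W}" using W(2) top by simp
        ultimately have "eventually (\<lambda>M. s M \<in> {z \<in> topspace T. z - l \<in> W}) sequentially"
          using lim unfolding limitin_def by blast
        then have "eventually (\<lambda>M. s M - l \<in> W \<and> Suc n \<le> M) sequentially"
          using eventually_ge_at_top[of "Suc n"] by (auto elim: eventually_mono simp: eventually_conj_iff)
        then obtain M where M: "s M - l \<in> W" "Suc n \<le> M" using eventually_sequentially by auto
        have "s M - l \<in> V" using M W by blast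
        moreover have "vabs a \<le> vabs (s M - l)" using vabs_pos[OF a0] aM[OF M(2)] by simp
        ultimately have "a \<in> V" using V(1) unfolding solid_def by blast
        then show False using V(2) by blast
      qed
      then have "inf (c n *\<^sub>R d n) y = 0" unfolding a_def by (simp add: inf_commute)
      then have "inf (inverse (c n) *\<^sub>R (c n *\<^sub>R d n)) y = 0"
        using disj_scale[of "c n *\<^sub>R d n" y "inverse (c n)"] y0 d0 c0
        by (simp add: scaleR_nonneg_nonneg less_imp_le)
      then show ?thesis using c0[of n] by (simp add: inf_commute)
    qed
    have "\<forall>z\<in>D. inf y z = 0"
    proof
      fix z assume "z \<in> D"
      then obtain n where "z = d n" using rd by (metis insertCI rangeE)
      then show "inf y z = 0" using dn by simp
    qed
    then have "y = 0" using maxD y0 by blast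
    then show "x = 0" unfolding y_def by (rule vabs_zero)
  qed
  then show ?thesis by blast
qed

theorem theorem4p6:
  fixes T :: "'a::{ordered_real_vector, lattice} topology"
  assumes "archimedean_vl TYPE('a)"
    and "locally_solid T"
    and "completely_metrizable_space T"
  shows "(\<forall>D::'a set. disjoint_system D \<longrightarrow> countable D) \<longleftrightarrow>
         ((\<exists>e::'a. weak_unit e) \<and> countable_sup_property TYPE('a))"
proof
  assume ccc: "\<forall>D::'a set. disjoint_system D \<longrightarrow> countable D"
  show "(\<exists>e::'a. weak_unit e) \<and> countable_sup_property TYPE('a)"
    using wu_from_ccc[OF assms(2,3) ccc] csp_from_ccc[OF assms(1) ccc] by blast
next
  assume "(\<exists>e::'a. weak_unit e) \<and> countable_sup_property TYPE('a)"
  then obtain e :: 'a where "weak_unit e" "countable_sup_property TYPE('a)" by blast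
  then show "\<forall>D::'a set. disjoint_system D \<longrightarrow> countable D"
    using ccc_from_wu_csp[OF assms(1)] by blast
qed

end
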